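(* Let $(N,\mathcal{M})$ be a matroid of rank $K$, $Z$ monotone submodular with $Z(\emptyset)=0$, $G=(g_1,\dots,g_K)$ the output of a run of GREEDY, and $\Omega$ an optimal basis ordered as $(\omega_1,\dots,\omega_K)$ so that $G^{i-1}\cup\{\omega_i\}\in\mathcal{M}$ for all $i$ and $\omega_i\in G\cap\Omega$ implies $\omega_i=g_i$. Then for every $t\in\{1,\dots,K\}$ and every $i$ with $\omega_i\in\Omega\setminus G$: $$\rho_{\omega_i}(G^{t-1})\le\begin{cases}\rho_t, & i>t,\\[2pt] \dfrac{\rho_i}{d_i}, & 1\le i\le t.\end{cases}$$
   Context: Matroid $(N,\mathcal{M})$ of rank $K$ (independent sets containing $\emptyset$, closed under subsets, with augmentation); basis = independent set of size $K$; optimal basis = basis maximizing $Z$ over $\mathcal{M}$. $\rho_q(S)=Z(S\cup\{q\})-Z(S)$; $S_\bot=\{j\in N\setminus S:S\cup\{j\}\in\mathcal{M}\}$. GREEDY: $G^0=\emptyset$; for $i=1,\dots,K$ choose $g_i\in\arg\max\{\rho_q(G^{i-1}):q\in G^{i-1}_\bot\}$, $G^i=G^{i-1}\cup\{g_i\}$, $G=G^K$, $\rho_i=\rho_{g_i}(G^{i-1})$. Discriminant $d_i=\rho_{g_i}(G^{i-1})/\max\{\rho_{g'}(G^{i-1}):g'\in G^{i-1}_\bot,g'\ne g_i\}$ ($=\infty$ if the maximum is $0$); $\rho_i/\infty=0$. *)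

theory Defs
  imports "HOL-Library.Extended_Real"
begin

definition matroid :: "'a set \<Rightarrow> 'a set set \<Rightarrow> bool" where
  "matroid N M \<longleftrightarrow> finite N \<and> M \<subseteq> Pow N \<and> {} \<in> M
     \<and> (\<forall>A B. B \<in> M \<and> A \<subseteq> B \<longrightarrow> A \<in> M)
     \<and> (\<forall>A B. A \<in> M \<and> B \<in> M \<and> card A < card B \<longrightarrow> (\<exists>x\<in>B - A. insert x A \<in> M))"

definition matroid_rank_is :: "'a set \<Rightarrow> 'a set set \<Rightarrow> nat \<Rightarrow> bool" where
  "matroid_rank_is N M K \<longleftrightarrow> (\<exists>B\<in>M. card B = K) \<and> (\<forall>A\<in>M. card A \<le> K)"

definition basis :: "'a set set \<Rightarrow> nat \<Rightarrow> 'a set \<Rightarrow> bool" where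
  "basis M K B \<longleftrightarrow> B \<in> M \<and> card B = K"

definition optimal_basis :: "'a set set \<Rightarrow> nat \<Rightarrow> ('a set \<Rightarrow> real) \<Rightarrow> 'a set \<Rightarrow> bool" where
  "optimal_basis M K Z B \<longleftrightarrow> basis M K B \<and> (\<forall>B'\<in>M. Z B' \<le> Z B)"

definition monotone_fn :: "'a set \<Rightarrow> ('a set \<Rightarrow> real) \<Rightarrow> bool" where
  "monotone_fn N Z \<longleftrightarrow> (\<forall>S T. S \<subseteq> T \<and> T \<subseteq> N \<longrightarrow> Z S \<le> Z T)"

definition submodular_fn :: "'a set \<Rightarrow> ('a set \<Rightarrow> real) \<Rightarrow> bool" where
  "submodular_fn N Z \<longleftrightarrow> (\<forall>A B. A \<subseteq> N \<and> B \<subseteq> N \<longrightarrow> Z (A \<union> B) + Z (A \<inter> B) \<le> Z A + Z B)"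

definition rho :: "('a set \<Rightarrow> real) \<Rightarrow> 'a \<Rightarrow> 'a set \<Rightarrow> real" where
  "rho Z q S = Z (S \<union> {q}) - Z S"

definition bot_set :: "'a set \<Rightarrow> 'a set set \<Rightarrow> 'a set \<Rightarrow> 'a set" where
  "bot_set N M S = {j \<in> N - S. S \<union> {j} \<in> M}"

definition Gpre :: "(nat \<Rightarrow> 'a) \<Rightarrow> nat \<Rightarrow> 'a set" where
  "Gpre g i = g ` {1..i}"

definition greedy_run :: "'a set \<Rightarrow> 'a set set \<Rightarrow> ('a set \<Rightarrow> real) \<Rightarrow> nat \<Rightarrow> (nat \<Rightarrow> 'a) \<Rightarrow> bool" where
  "greedy_run N M Z K g \<longleftrightarrow> (\<forall>i\<in>{1..K}.
      g i \<in> bot_set N M (Gpre g (i - 1)) \<and>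
      (\<forall>q\<in>bot_set N M (Gpre g (i - 1)). rho Z q (Gpre g (i - 1)) \<le> rho Z (g i) (Gpre g (i - 1))))"

definition rho_i :: "('a set \<Rightarrow> real) \<Rightarrow> (nat \<Rightarrow> 'a) \<Rightarrow> nat \<Rightarrow> real" where
  "rho_i Z g i = rho Z (g i) (Gpre g (i - 1))"

definition discr :: "'a set \<Rightarrow> 'a set set \<Rightarrow> ('a set \<Rightarrow> real) \<Rightarrow> (nat \<Rightarrow> 'a) \<Rightarrow> nat \<Rightarrow> ereal" where
  "discr N M Z g i = (let S = Gpre g (i - 1); C = bot_set N M S - {g i} in
     if C = {} then \<infinity> else
     (let m = Max ((\<lambda>q. rho Z q S) ` C) in
      if m = 0 then \<infinity> else ereal (rho_i Z g i / m)))"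

end

theory Submission
  imports Defs
begin

lemma Gpre_mono: "a \<le> b \<Longrightarrow> Gpre g a \<subseteq> Gpre g b"
  unfolding Gpre_def by auto

lemma Gpre_subN:
  assumes "greedy_run N M Z K g" "a \<le> K"
  shows "Gpre g a \<subseteq> N"
proof
  fix x assume "x \<in> Gpre g a"
  then obtain j where j: "j \<in> {1..a}" "x = g j" unfolding Gpre_def by auto
  with assms have "g j \<in> bot_set N M (Gpre g (j - 1))" unfolding greedy_run_def by auto
  then show "x \<in> N" using j unfolding bot_set_def by auto
qed

lemma dimin:
  assumes "submodular_fn N Z" "S \<subseteq> T" "T \<subseteq> N" "w \<in> N" "w \<notin> T"
  shows "rho Z w T \<le> rho Z w S"
proof -
  have "S \<union> {w} \<subseteq> N" using assms by auto
  hence "Z ((S \<union> {w}) \<union> T) + Z ((S \<union> {w}) \<inter> T) \<le> Z (S \<union> {w}) + Z T"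
    using assms(1,3) unfolding submodular_fn_def by blast
  moreover have "(S \<union> {w}) \<union> T = T \<union> {w}" "(S \<union> {w}) \<inter> T = S" using assms by auto
  ultimately show ?thesis unfolding rho_def by simp
qed

lemma rho_nonneg:
  assumes "monotone_fn N Z" "S \<subseteq> N" "w \<in> N"
  shows "0 \<le> rho Z w S"
proof -
  have "Z S \<le> Z (S \<union> {w})" using assms unfolding monotone_fn_def by blast
  thus ?thesis unfolding rho_def by simp
qed

theorem lemma11:
  fixes N :: "'a set" and M :: "'a set set" and K :: nat
    and Z :: "'a set \<Rightarrow> real" and g \<omega> :: "nat \<Rightarrow> 'a"
  assumes "matroid N M" and "matroid_rank_is N M K"
    and "monotone_fn N Z" and "submodular_fn N Z" and "Z {} = 0"
    and "greedy_run N M Z K g"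
    and "optimal_basis M K Z (\<omega> ` {1..K})" and "inj_on \<omega> {1..K}"
    and "\<forall>i\<in>{1..K}. Gpre g (i - 1) \<union> {\<omega> i} \<in> M"
    and "\<forall>i\<in>{1..K}. \<omega> i \<in> Gpre g K \<inter> \<omega> ` {1..K} \<longrightarrow> \<omega> i = g i"
  shows "\<forall>t\<in>{1..K}. \<forall>i\<in>{1..K}. \<omega> i \<in> \<omega> ` {1..K} - Gpre g K \<longrightarrow>
           (i > t \<longrightarrow> rho Z (\<omega> i) (Gpre g (t - 1)) \<le> rho_i Z g t) \<and>
           (i \<le> t \<longrightarrow> ereal (rho Z (\<omega> i) (Gpre g (t - 1))) \<le> ereal (rho_i Z g i) / discr N M Z g i)"
proof (intro ballI impI conjI)
  fix t i assume t: "t \<in> {1..K}" and i: "i \<in> {1..K}" and wi: "\<omega> i \<in> \<omega> ` {1..K} - Gpre g K"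
  have MN: "M \<subseteq> Pow N" and sub: "\<And>A B. B \<in> M \<Longrightarrow> A \<subseteq> B \<Longrightarrow> A \<in> M" and fN: "finite N"
    using assms(1) unfolding matroid_def by blast+
  have iM: "Gpre g (i - 1) \<union> {\<omega> i} \<in> M" using assms(9) i by auto
  hence wN: "\<omega> i \<in> N" using MN by auto
  have notG: "\<And>a. a \<le> K \<Longrightarrow> \<omega> i \<notin> Gpre g a"
  proof
    fix a assume "a \<le> K" "\<omega> i \<in> Gpre g a"
    hence "\<omega> i \<in> Gpre g K" using Gpre_mono[of a K g] by (rule_tac subsetD) auto
    thus False using wi by simp
  qed
  have GN: "\<And>a. a \<le> K \<Longrightarrow> Gpre g a \<subseteq> N" using Gpre_subN[OF assms(6)] by simp
  {
    assume "i > t"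
    have "t - 1 \<le> i - 1" using \<open>i > t\<close> by simp
    hence "Gpre g (t - 1) \<union> {\<omega> i} \<subseteq> Gpre g (i - 1) \<union> {\<omega> i}"
      using Gpre_mono[of "t - 1" "i - 1" g] by blast
    hence "Gpre g (t - 1) \<union> {\<omega> i} \<in> M" by (rule sub[OF iM])
    moreover have "\<omega> i \<notin> Gpre g (t - 1)" using t by (intro notG) auto
    ultimately have "\<omega> i \<in> bot_set N M (Gpre g (t - 1))" using wN unfolding bot_set_def by auto
    then show "rho Z (\<omega> i) (Gpre g (t - 1)) \<le> rho_i Z g t"
      using assms(6) t unfolding greedy_run_def rho_i_def by auto
  }
  {
    assume "i \<le> t"
    define S where "S = Gpre g (i - 1)"
    define C where "C = bot_set N M S - {g i}"
    have le1: "rho Z (\<omega> i) (Gpre g (t - 1)) \<le> rho Z (\<omega> i) S"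
      unfolding S_def
    proof (rule dimin[OF assms(4)])
      show "Gpre g (i - 1) \<subseteq> Gpre g (t - 1)" using Gpre_mono[of "i - 1" "t - 1" g] \<open>i \<le> t\<close> by simp
      show "Gpre g (t - 1) \<subseteq> N" using t by (intro GN) auto
      show "\<omega> i \<in> N" by (rule wN)
      show "\<omega> i \<notin> Gpre g (t - 1)" using t by (intro notG) auto
    qed
    have gi: "g i \<in> Gpre g K" unfolding Gpre_def using i by auto
    have "\<omega> i \<notin> S" unfolding S_def using i by (intro notG) auto
    hence wbot: "\<omega> i \<in> bot_set N M S" using iM wN unfolding bot_set_def S_def by auto
    have wC: "\<omega> i \<in> C" using wbot gi wi unfolding C_def by auto
    have finC: "finite C" using fN unfolding C_def bot_set_def by auto
    define m where "m = Max ((\<lambda>q. rho Z q S) ` C)"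
    have wm: "rho Z (\<omega> i) S \<le> m" unfolding m_def using finC wC by auto
    have "m \<in> (\<lambda>q. rho Z q S) ` C" unfolding m_def using finC wC by (intro Max_in) auto
    then obtain q where q: "q \<in> C" "m = rho Z q S" by auto
    have SN: "S \<subseteq> N" unfolding S_def using i by (intro GN) auto
    have m0: "0 \<le> m" using q rho_nonneg[OF assms(3) SN, of q] unfolding C_def bot_set_def by auto
    have mri: "m \<le> rho_i Z g i" using q assms(6) i unfolding greedy_run_def rho_i_def C_def S_def by auto
    have Cne: "C \<noteq> {}" using wC by auto
    have dd: "discr N M Z g i = (if C = {} then \<infinity> else if m = 0 then \<infinity> else ereal (rho_i Z g i / m))"
      unfolding discr_def Let_def S_def C_def m_def by (rule refl)
    show "ereal (rho Z (\<omega> i) (Gpre g (t - 1))) \<le> ereal (rho_i Z g i) / discr N M Z g i"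
    proof (cases "m = 0")
      case True
      hence "discr N M Z g i = \<infinity>" using Cne dd by simp
      moreover have "rho Z (\<omega> i) (Gpre g (t - 1)) \<le> 0" using le1 wm True by auto
      ultimately show ?thesis by simp
    next
      case False
      hence "discr N M Z g i = ereal (rho_i Z g i / m)" using Cne dd by simp
      moreover have "rho_i Z g i / m \<noteq> 0" using False m0 mri by auto
      moreover have "rho_i Z g i / (rho_i Z g i / m) = m" using False m0 mri by auto
      ultimately show ?thesis using le1 wm by simp
    qed
  }
qed

end
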